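(* Let $\mathbb{F}$ be a finite field and let $t,k,b,\ell$ be positive integers with $\ell<bk$. There exists a $t$-private $k$-party $\ell$-LMSSS over $\mathbb{F}$ in which every party's share lies in $\mathbb{F}^b$ (i.e. $b_1=\dots=b_k=b$) and whose access structure is $\Gamma=\{[k]\}$ (so its information rate is $\ell/(kb)$) if and only if there exists an $\mathbb{F}$-linear code $C\subseteq(\mathbb{F}^b)^k$ with rate at least $\ell/(kb)$ and distance at least $t+1$.
   Context: A $k$-party $\ell$-LMSSS over a finite field $\mathbb{F}$ with access structure $\Gamma$ (monotone increasing family of subsets of $[k]$) and adversary structure $\mathcal{T}$ (monotone decreasing, disjoint from $\Gamma$) is given by integers $e,b_1,\dots,b_k$ and an $\mathbb{F}$-linear map $\mathsf{Share}:\mathbb{F}^\ell\times\mathbb{F}^e\to\mathbb{F}^{b_1}\times\cdots\times\mathbb{F}^{b_k}$ such that for every $Q\in\Gamma$ a linear map recovers $\mathbf{x}$ from $\mathsf{Share}(\mathbf{x},\mathbf{r})_Q$ for all $\mathbf{x},\mathbf{r}$, and for every $U\in\mathcal{T}$ the distribution of $\mathsf{Share}(\mathbf{x},\mathbf{r})_U$ with $\mathbf{r}$ uniform in $\mathbb{F}^e$ does not depend on $\mathbf{x}$. It is $t$-private if $\mathcal{T}$ contains all subsets of size at most $t$; its information rate is $\ell/(b_1+\cdots+b_k)$. An $\mathbb{F}$-linear code with alphabet $\mathbb{F}^b$ and block length $k$ is an $\mathbb{F}$-linear subspace $C\subseteq(\mathbb{F}^b)^k$; its rate is $\dim_{\mathbb{F}}(C)/(bk)$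 and its distance is $\min_{c\ne c'\in C}|\{i\in[k]: c_i\ne c'_i\}|$. *)

theory Defs
  imports "HOL-Probability.Probability" "HOL-Library.Function_Algebras"
begin

(* Vectors in F^n are represented as functions nat => 'f vanishing outside {..<n}.
   Elements of (F^b)^k (share vectors / codewords) are functions
   nat => nat => 'f, s i j = j-th coordinate of party i's share, vanishing
   unless i < k and j < b.  Parties are indexed by {..<k} instead of [k]. *)

definition vecs :: "nat \<Rightarrow> (nat \<Rightarrow> 'f::zero) set" where
  "vecs n = {v. \<forall>i\<ge>n. v i = 0}"

definition words :: "nat \<Rightarrow> nat \<Rightarrow> (nat \<Rightarrow> nat \<Rightarrow> 'f::zero) set" where
  "words k b = {s. \<forall>i j. (k \<le> i \<or> b \<le> j) \<longrightarrow> s i j = 0}"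

definition wscale :: "'f::times \<Rightarrow> (nat \<Rightarrow> nat \<Rightarrow> 'f) \<Rightarrow> (nat \<Rightarrow> nat \<Rightarrow> 'f)" where
  "wscale c s = (\<lambda>i j. c * s i j)"

definition vscale :: "'f::times \<Rightarrow> (nat \<Rightarrow> 'f) \<Rightarrow> (nat \<Rightarrow> 'f)" where
  "vscale c v = (\<lambda>i. c * v i)"

definition restr :: "nat set \<Rightarrow> (nat \<Rightarrow> nat \<Rightarrow> 'f::zero) \<Rightarrow> (nat \<Rightarrow> nat \<Rightarrow> 'f)" where
  "restr Q s = (\<lambda>i j. if i \<in> Q then s i j else 0)"

definition share_linear ::
  "nat \<Rightarrow> nat \<Rightarrow> nat \<Rightarrow> nat \<Rightarrow>
   ((nat \<Rightarrow> 'f::field) \<Rightarrow> (nat \<Rightarrow> 'f) \<Rightarrow> (nat \<Rightarrow> nat \<Rightarrow> 'f)) \<Rightarrow> bool" where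
  "share_linear k b l e Share \<longleftrightarrow>
     (\<forall>x\<in>vecs l. \<forall>r\<in>vecs e. Share x r \<in> words k b) \<and>
     (\<forall>x\<in>vecs l. \<forall>r\<in>vecs e. \<forall>x'\<in>vecs l. \<forall>r'\<in>vecs e.
        Share (x + x') (r + r') = Share x r + Share x' r') \<and>
     (\<forall>x\<in>vecs l. \<forall>r\<in>vecs e. \<forall>c.
        Share (vscale c x) (vscale c r) = wscale c (Share x r))"

definition rec_linear :: "((nat \<Rightarrow> nat \<Rightarrow> 'f::field) \<Rightarrow> (nat \<Rightarrow> 'f)) \<Rightarrow> bool" where
  "rec_linear R \<longleftrightarrow> (\<forall>s s'. R (s + s') = R s + R s') \<and> (\<forall>c s. R (wscale c s) = vscale c (R s))"

definition recovers where
  "recovers l e Share Q \<longleftrightarrow>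
     (\<exists>R. rec_linear R \<and> (\<forall>x\<in>vecs l. \<forall>r\<in>vecs e. R (restr Q (Share x r)) = x))"

definition hides where
  "hides l e Share U \<longleftrightarrow>
     (\<forall>x\<in>vecs l. \<forall>x'\<in>vecs l.
        map_pmf (\<lambda>r. restr U (Share x r)) (pmf_of_set (vecs e)) =
        map_pmf (\<lambda>r. restr U (Share x' r)) (pmf_of_set (vecs e)))"

(* k-party l-LMSSS over 'f with randomness length e, share sizes all equal to b,
   access structure Acc and adversary structure T *)
definition is_LMSSS ::
  "nat \<Rightarrow> nat \<Rightarrow> nat \<Rightarrow> nat \<Rightarrow>
   ((nat \<Rightarrow> 'f::{field,finite}) \<Rightarrow> (nat \<Rightarrow> 'f) \<Rightarrow> (nat \<Rightarrow> nat \<Rightarrow> 'f)) \<Rightarrow>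
   nat set set \<Rightarrow> nat set set \<Rightarrow> bool" where
  "is_LMSSS k b l e Share Acc T \<longleftrightarrow>
     share_linear k b l e Share \<and>
     Acc \<subseteq> Pow {..<k} \<and> T \<subseteq> Pow {..<k} \<and>
     (\<forall>A\<in>Acc. \<forall>B. A \<subseteq> B \<and> B \<subseteq> {..<k} \<longrightarrow> B \<in> Acc) \<and>
     (\<forall>A\<in>T. \<forall>B. B \<subseteq> A \<longrightarrow> B \<in> T) \<and>
     Acc \<inter> T = {} \<and>
     (\<forall>Q\<in>Acc. recovers l e Share Q) \<and>
     (\<forall>U\<in>T. hides l e Share U)"

definition t_private :: "nat \<Rightarrow> nat \<Rightarrow> nat set set \<Rightarrow> bool" where
  "t_private k t T \<longleftrightarrow> (\<forall>U. U \<subseteq> {..<k} \<and> card U \<le> t \<longrightarrow> U \<in> T)"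

definition linear_code :: "nat \<Rightarrow> nat \<Rightarrow> (nat \<Rightarrow> nat \<Rightarrow> 'f::field) set \<Rightarrow> bool" where
  "linear_code k b C \<longleftrightarrow> C \<subseteq> words k b \<and> 0 \<in> C \<and>
     (\<forall>c\<in>C. \<forall>c'\<in>C. c + c' \<in> C) \<and> (\<forall>a. \<forall>c\<in>C. wscale a c \<in> C)"

definition code_dim :: "(nat \<Rightarrow> nat \<Rightarrow> 'f::field) set \<Rightarrow> nat" where
  "code_dim C = vector_space.dim wscale C"

definition code_rate :: "nat \<Rightarrow> nat \<Rightarrow> (nat \<Rightarrow> nat \<Rightarrow> 'f::field) set \<Rightarrow> real" where
  "code_rate k b C = real (code_dim C) / real (b * k)"

definition dist_atleast :: "nat \<Rightarrow> (nat \<Rightarrow> nat \<Rightarrow> 'f) set \<Rightarrow> nat \<Rightarrow> bool" where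
  "dist_atleast k C d \<longleftrightarrow>
     (\<forall>c\<in>C. \<forall>c'\<in>C. c \<noteq> c' \<longrightarrow> d \<le> card {i\<in>{..<k}. c i \<noteq> c' i})"

end

theory Submission
  imports Defs
begin


lemma sum_fun_app: "(\<Sum>a\<in>A. f a) x = (\<Sum>a\<in>A. f a x)"
  by (induction A rule: infinite_finite_induct) auto

lemma sum_fun_app2: "(\<Sum>a\<in>A. f a) x y = (\<Sum>a\<in>A. f a x y)"
  by (simp add: sum_fun_app)

interpretation ws: vector_space "wscale :: 'f::field \<Rightarrow> (nat \<Rightarrow> nat \<Rightarrow> 'f) \<Rightarrow> _"
  by unfold_locales (auto simp: wscale_def fun_eq_iff algebra_simps)

lemma code_dim_ws: "code_dim C = ws.dim C"
  by (simp add: code_dim_def)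

definition dot :: "nat \<Rightarrow> nat \<Rightarrow> (nat \<Rightarrow> nat \<Rightarrow> 'f::field) \<Rightarrow> (nat \<Rightarrow> nat \<Rightarrow> 'f) \<Rightarrow> 'f" where
  "dot k b c s = (\<Sum>i<k. \<Sum>j<b. c i j * s i j)"

lemma dot_add: "dot k b c (s + s') = dot k b c s + dot k b c s'"
  by (simp add: dot_def algebra_simps sum.distrib)
lemma dot_diff: "dot k b c (s - s') = dot k b c s - dot k b c s'"
  by (simp add: dot_def algebra_simps sum_subtractf)
lemma dot_scale: "dot k b c (wscale a s) = a * dot k b c s"
  by (simp add: dot_def wscale_def sum_distrib_left algebra_simps)
lemma dot_zero[simp]: "dot k b c 0 = 0" "dot k b 0 s = 0"
  by (simp_all add: dot_def zero_fun_def)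
lemma dot_sum: "dot k b c (\<Sum>m\<in>M. f m) = (\<Sum>m\<in>M. dot k b c (f m))"
proof (induction M rule: infinite_finite_induct)
  case (insert x F)
  have "sum f (insert x F) = f x + sum f F" using insert(1,2) by (rule sum.insert)
  then show ?case using insert(1,2) by (simp only: dot_add insert.IH sum.insert[OF insert(1,2)])
qed (simp_all add: dot_def)
lemma dot_addL: "dot k b (c + c') s = dot k b c s + dot k b c' s"
  by (simp add: dot_def algebra_simps sum.distrib)
lemma dot_scaleL: "dot k b (wscale a c) s = a * dot k b c s"
  by (simp add: dot_def wscale_def sum_distrib_left algebra_simps)
lemma dot_sumL: "dot k b (\<Sum>m\<in>M. f m) s = (\<Sum>m\<in>M. dot k b (f m) s)"
proof (induction M rule: infinite_finite_induct)
  case (insert x F)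
  have "sum f (insert x F) = f x + sum f F" using insert(1,2) by (rule sum.insert)
  then show ?case using insert(1,2) by (simp only: dot_addL insert.IH sum.insert[OF insert(1,2)])
qed (simp_all add: dot_def)

lemma words_add: "(s::nat\<Rightarrow>nat\<Rightarrow>'f::field) \<in> words k b \<Longrightarrow> s' \<in> words k b \<Longrightarrow> s + s' \<in> words k b"
  by (simp add: words_def)
lemma words_diff: "(s::nat\<Rightarrow>nat\<Rightarrow>'f::field) \<in> words k b \<Longrightarrow> s' \<in> words k b \<Longrightarrow> s - s' \<in> words k b"
  by (simp add: words_def)
lemma words_scale: "(s::nat\<Rightarrow>nat\<Rightarrow>'f::field) \<in> words k b \<Longrightarrow> wscale a s \<in> words k b"
  by (simp add: words_def wscale_def)
lemma words_zero: "(0::nat\<Rightarrow>nat\<Rightarrow>'f::field) \<in> words k b"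
  by (simp add: words_def)
lemma words_sum: "(\<And>m. m \<in> M \<Longrightarrow> (f m::nat\<Rightarrow>nat\<Rightarrow>'f::field) \<in> words k b) \<Longrightarrow> (\<Sum>m\<in>M. f m) \<in> words k b"
  by (induction M rule: infinite_finite_induct) (auto simp: words_add words_zero)

lemma finite_vecs: "finite (vecs n :: (nat \<Rightarrow> 'f::{finite,zero}) set)"
proof -
  have "vecs n \<subseteq> (\<lambda>g i. if i < n then g i else 0) ` ({..<n} \<rightarrow>\<^sub>E (UNIV::'f set))"
  proof
    fix v :: "nat \<Rightarrow> 'f" assume "v \<in> vecs n"
    then have "v = (\<lambda>i. if i < n then restrict v {..<n} i else 0)"
      by (auto simp: vecs_def fun_eq_iff)
    then show "v \<in> (\<lambda>g i. if i < n then g i else 0) ` ({..<n} \<rightarrow>\<^sub>E (UNIV::'f set))"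
      by (rule image_eqI[where x="restrict v {..<n}"]) simp_all
  qed
  then show ?thesis by (rule finite_subset) (intro finite_imageI finite_PiE; simp)
qed

lemma finite_words: "finite (words k b :: (nat \<Rightarrow> nat \<Rightarrow> 'f::{finite,zero}) set)"
proof -
  let ?F = "\<lambda>g i j. if i < k \<and> j < b then g (i,j) else (0::'f)"
  have "words k b \<subseteq> ?F ` (({..<k}\<times>{..<b}) \<rightarrow>\<^sub>E (UNIV::'f set))"
  proof
    fix s :: "nat \<Rightarrow> nat \<Rightarrow> 'f" assume "s \<in> words k b"
    then have "s = ?F (restrict (\<lambda>(i,j). s i j) ({..<k}\<times>{..<b}))"
      by (auto simp: words_def fun_eq_iff)
    then show "s \<in> ?F ` (({..<k}\<times>{..<b}) \<rightarrow>\<^sub>E (UNIV::'f set))"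
      by (rule image_eqI[where x="restrict (\<lambda>(i,j). s i j) ({..<k}\<times>{..<b})"]) simp_all
  qed
  then show ?thesis by (rule finite_subset) (intro finite_imageI finite_PiE; simp)
qed

lemma vecs_nonempty: "vecs n \<noteq> {}"
  by (auto simp: vecs_def intro!: exI[of _ 0])


lemma dual_exists:
  fixes c :: "nat \<Rightarrow> nat \<Rightarrow> nat \<Rightarrow> 'f::field" and Z :: "(nat\<Rightarrow>nat\<Rightarrow>'f) set"
  assumes Zadd: "\<And>z z'. z\<in>Z \<Longrightarrow> z'\<in>Z \<Longrightarrow> z + z' \<in> Z"
   and Zscale: "\<And>a z. z\<in>Z \<Longrightarrow> wscale a z \<in> Z"
   and Z0: "0 \<in> Z"
   and indep: "\<And>lam. (\<forall>z\<in>Z. (\<Sum>m<d. lam m * dot k b (c m) z) = 0) \<Longrightarrow> \<forall>m<d. lam m = 0"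
  shows "\<exists>u. \<forall>m<d. u m \<in> Z \<and> (\<forall>m'<d. dot k b (c m') (u m) = (if m' = m then 1 else 0))"
  using indep
proof (induction d)
  case 0 then show ?case by simp
next
  case (Suc n)
  have Zdiff: "z - z' \<in> Z" if "z \<in> Z" "z' \<in> Z" for z z'
  proof -
    have "z - z' = z + wscale (-1) z'" by (simp add: wscale_def fun_eq_iff)
    then show ?thesis using that Zadd Zscale by metis
  qed
  have Zsum: "(\<Sum>m\<in>M. f m) \<in> Z" if "\<And>m. m \<in> M \<Longrightarrow> f m \<in> Z" for M f
    using that by (induction M rule: infinite_finite_induct) (auto simp: Zadd Z0)
  have "\<forall>m<n. lam m = 0" if h: "\<forall>z\<in>Z. (\<Sum>m<n. lam m * dot k b (c m) z) = 0" for lam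
  proof -
    have "\<forall>z\<in>Z. (\<Sum>m<Suc n. (lam(n:=0)) m * dot k b (c m) z) = 0"
      using h by simp
    then have "\<forall>m<Suc n. (lam(n:=0)) m = 0" by (rule Suc.prems)
    then show ?thesis by (metis fun_upd_other less_Suc_eq nat_neq_iff)
  qed
  then obtain u where u: "\<forall>m<n. u m \<in> Z \<and> (\<forall>m'<n. dot k b (c m') (u m) = (if m' = m then 1 else 0))"
    using Suc.IH by blast
  have "\<exists>z\<in>Z. dot k b (c n) z \<noteq> 0 \<and> (\<forall>m<n. dot k b (c m) z = 0)"
  proof (rule ccontr)
    assume no: "\<not> ?thesis"
    define lam where "lam m = (if m < n then dot k b (c n) (u m) else -1)" for m
    have "\<forall>z\<in>Z. (\<Sum>m<Suc n. lam m * dot k b (c m) z) = 0"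
    proof
      fix z assume z: "z \<in> Z"
      define z' where "z' = z - (\<Sum>m<n. wscale (dot k b (c m) z) (u m))"
      have z'Z: "z' \<in> Z" unfolding z'_def using z u by (intro Zdiff Zsum Zscale) auto
      have "dot k b (c m') z' = 0" if m': "m' < n" for m'
      proof -
        have "dot k b (c m') z' = dot k b (c m') z - (\<Sum>m<n. dot k b (c m) z * dot k b (c m') (u m))"
          unfolding z'_def by (simp add: dot_diff dot_sum dot_scale)
        also have "(\<Sum>m<n. dot k b (c m) z * dot k b (c m') (u m)) = (\<Sum>m<n. if m' = m then dot k b (c m) z else 0)"
          using u m' by (intro sum.cong) auto
        also have "\<dots> = dot k b (c m') z" using m' by simp
        finally show ?thesis by simp
      qed
      then have "dot k b (c n) z' = 0" using no z'Z by blast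
      then have "dot k b (c n) z = (\<Sum>m<n. dot k b (c m) z * dot k b (c n) (u m))"
        unfolding z'_def by (simp add: dot_diff dot_sum dot_scale)
      then show "(\<Sum>m<Suc n. lam m * dot k b (c m) z) = 0"
        by (simp add: lam_def mult.commute)
    qed
    then have "\<forall>m<Suc n. lam m = 0" by (rule Suc.prems)
    then have "lam n = 0" by simp
    then show False by (simp add: lam_def)
  qed
  then obtain z where z: "z \<in> Z" "dot k b (c n) z \<noteq> 0" "\<forall>m<n. dot k b (c m) z = 0" by blast
  define zn where "zn = wscale (inverse (dot k b (c n) z)) z"
  have znZ: "zn \<in> Z" using z by (simp add: zn_def Zscale)
  have zn1: "dot k b (c n) zn = 1" using z by (simp add: zn_def dot_scale)
  have zn0: "\<forall>m<n. dot k b (c m) zn = 0" using z by (simp add: zn_def dot_scale)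
  define u' where "u' m = (if m < n then u m - wscale (dot k b (c n) (u m)) zn else zn)" for m
  have "\<forall>m<Suc n. u' m \<in> Z \<and> (\<forall>m'<Suc n. dot k b (c m') (u' m) = (if m' = m then 1 else 0))"
  proof (intro allI impI conjI)
    fix m assume m: "m < Suc n"
    show "u' m \<in> Z" using u znZ m by (auto simp: u'_def intro!: Zdiff Zscale)
    fix m' assume m': "m' < Suc n"
    show "dot k b (c m') (u' m) = (if m' = m then 1 else 0)"
    proof (cases "m < n")
      case True
      then show ?thesis using m' u zn1 zn0
        by (cases "m' < n") (auto simp: u'_def dot_diff dot_scale less_Suc_eq)
    next
      case False
      then have "m = n" using m by simp
      then show ?thesis using m' zn1 zn0 by (auto simp: u'_def less_Suc_eq)
    qed
  qed
  then show ?case by blast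
qed


lemma wscale_delta_sum:
  fixes l i :: nat
  assumes "i < l"
  shows "(\<Sum>m<l. wscale (if m = i then 1 else 0) (c m)) = (c i :: nat\<Rightarrow>nat\<Rightarrow>'f::field)"
proof -
  have "(\<Sum>m<l. wscale (if m = i then 1 else 0) (c m)) = (\<Sum>m<l. if m = i then c m else 0)"
    by (intro sum.cong) (auto simp: wscale_def fun_eq_iff)
  also have "\<dots> = c i" using assms by (subst sum.delta) auto
  finally show ?thesis .
qed

lemma indep_inj:
  fixes c :: "nat \<Rightarrow> nat \<Rightarrow> nat \<Rightarrow> 'f::field"
  assumes indep: "\<forall>lam. (\<Sum>i<l. wscale (lam i) (c i)) = 0 \<longrightarrow> (\<forall>i<l. lam i = 0)"
  shows "inj_on c {..<l}"
proof (rule inj_onI, rule ccontr)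
  fix i j assume i: "i \<in> {..<l}" and j: "j \<in> {..<l}" and eq: "c i = c j" and ne: "i \<noteq> j"
  define lam where "lam m = (if m = i then 1 else 0) - (if m = j then 1 else (0::'f))" for m
  have "(\<Sum>m<l. wscale (lam m) (c m)) = (\<Sum>m<l. wscale (if m = i then 1 else 0) (c m) - wscale (if m = j then 1 else 0) (c m))"
    unfolding lam_def by (intro sum.cong) (auto simp: ws.scale_left_diff_distrib)
  also have "\<dots> = c i - c j" using i j by (simp only: sum_subtractf wscale_delta_sum lessThan_iff)
  also have "\<dots> = 0" using eq by simp
  finally have "\<forall>m<l. lam m = 0" using indep by blast
  then have "lam i = 0" using i by simp
  then show False using ne by (simp add: lam_def)
qed

lemma basis_family:
  fixes C :: "(nat \<Rightarrow> nat \<Rightarrow> 'f::field) set"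
  assumes fin: "finite C" and le: "l \<le> ws.dim C"
  shows "\<exists>c. (\<forall>i<l. c i \<in> C) \<and> (\<forall>lam. (\<Sum>i<l. wscale (lam i) (c i)) = 0 \<longrightarrow> (\<forall>i<l. lam i = 0))"
proof -
  obtain B where B: "B \<subseteq> C" "ws.independent B" "C \<subseteq> ws.span B" "card B = ws.dim C"
    by (rule ws.basis_exists)
  have finB: "finite B" using B(1) fin finite_subset by blast
  obtain f where f: "bij_betw f {0..<card B} B" using ex_bij_betw_nat_finite[OF finB] by blast
  have injf: "inj_on f {..<l}" using f le B(4)
    by (auto simp: bij_betw_def intro: inj_on_subset)
  have fB: "f i \<in> B" if "i < l" for i using f le B(4) that by (auto simp: bij_betw_def)
  show ?thesis
  proof (intro exI[of _ f] conjI allI impI)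
    fix i assume "i < l" then show "f i \<in> C" using fB B(1) by blast
  next
    fix lam i assume s: "(\<Sum>i<l. wscale (lam i) (f i)) = 0" and i: "i < l"
    define u where "u v = lam (inv_into {..<l} f v)" for v
    have "(\<Sum>v\<in>f ` {..<l}. wscale (u v) v) = (\<Sum>i<l. wscale (u (f i)) (f i))"
      using injf by (simp add: sum.reindex)
    also have "\<dots> = (\<Sum>i<l. wscale (lam i) (f i))"
      using injf by (intro sum.cong) (auto simp: u_def inv_into_f_f)
    finally have "(\<Sum>v\<in>f ` {..<l}. wscale (u v) v) = 0" using s by simp
    then have "u (f i) = 0"
      using ws.independentD[OF B(2), of "f ` {..<l}" u "f i"] fB i by auto
    then show "lam i = 0" using injf i by (simp add: u_def inv_into_f_f)
  qed
qed

lemma dim_family: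
  fixes c :: "nat \<Rightarrow> nat \<Rightarrow> nat \<Rightarrow> 'f::field"
  assumes indep: "\<forall>lam. (\<Sum>i<l. wscale (lam i) (c i)) = 0 \<longrightarrow> (\<forall>i<l. lam i = 0)"
  shows "ws.dim (range (\<lambda>lam. \<Sum>i<l. wscale (lam i) (c i))) = l"
proof -
  have inj: "inj_on c {..<l}" using indep by (rule indep_inj)
  show ?thesis
  proof (rule ws.dim_unique[of "c ` {..<l}"])
    show "c ` {..<l} \<subseteq> range (\<lambda>lam. \<Sum>i<l. wscale (lam i) (c i))"
    proof
      fix x assume "x \<in> c ` {..<l}"
      then obtain j where j: "j < l" "x = c j" by auto
      then show "x \<in> range (\<lambda>lam. \<Sum>i<l. wscale (lam i) (c i))"
        using wscale_delta_sum[OF j(1), of c] by (intro image_eqI[where x="\<lambda>m. if m = j then 1 else 0"]) auto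
    qed
    show "range (\<lambda>lam. \<Sum>i<l. wscale (lam i) (c i)) \<subseteq> ws.span (c ` {..<l})"
    proof (rule subsetI, elim rangeE)
      fix x lam assume x: "x = (\<Sum>i<l. wscale (lam i) (c i))"
      show "x \<in> ws.span (c ` {..<l})" unfolding x
        by (rule ws.span_sum, rule ws.span_scale, rule ws.span_base) auto
    qed
    show "ws.independent (c ` {..<l})"
    proof (rule ws.independent_if_scalars_zero)
      show "finite (c ` {..<l})" by simp
      fix f x assume s: "(\<Sum>x\<in>c ` {..<l}. wscale (f x) x) = 0" and x: "x \<in> c ` {..<l}"
      have "(\<Sum>i<l. wscale (f (c i)) (c i)) = 0" using s by (simp add: sum.reindex[OF inj])
      then have "\<forall>i<l. f (c i) = 0" using spec[OF indep, of "\<lambda>i. f (c i)"] by blast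
      then show "f x = 0" using x by auto
    qed
    show "card (c ` {..<l}) = l" using inj by (simp add: card_image)
  qed
qed


definition unitw :: "nat \<Rightarrow> nat \<Rightarrow> nat \<Rightarrow> nat \<Rightarrow> 'f::field" where
  "unitw i j = (\<lambda>a b'. if a = i \<and> b' = j then 1 else 0)"

lemma words_decomp:
  assumes "(s :: nat \<Rightarrow> nat \<Rightarrow> 'f::field) \<in> words k b"
  shows "s = (\<Sum>i<k. \<Sum>j<b. wscale (s i j) (unitw i j))"
proof (rule ext, rule ext)
  fix a b'
  have "(\<Sum>i<k. \<Sum>j<b. wscale (s i j) (unitw i j)) a b' = (\<Sum>i<k. \<Sum>j<b. s i j * (if a = i \<and> b' = j then 1 else 0))"
    unfolding sum_fun_app2 by (simp only: wscale_def unitw_def)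
  also have "\<dots> = (\<Sum>i<k. if i = a then (\<Sum>j<b. s a j * (if b' = j then 1 else 0)) else 0)"
    by (intro sum.cong refl) auto
  also have "\<dots> = (\<Sum>i<k. if i = a then (\<Sum>j<b. if b' = j then s a j else 0) else 0)"
  proof -
    have eq: "\<And>j. s a j * (if b' = j then 1 else 0) = (if b' = j then s a j else 0)" by simp
    show ?thesis by (simp only: eq)
  qed
  also have "\<dots> = (if a < k \<and> b' < b then s a b' else 0)"
    by (subst sum.delta, simp, subst sum.delta', auto)
  also have "\<dots> = s a b'" using assms by (auto simp: words_def)
  finally show "s a b' = (\<Sum>i<k. \<Sum>j<b. wscale (s i j) (unitw i j)) a b'" by simp
qed

lemma restr_words: "(s :: nat \<Rightarrow> nat \<Rightarrow> 'f::field) \<in> words k b \<Longrightarrow> restr {..<k} s = s"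
  by (auto simp: restr_def words_def fun_eq_iff)

lemma rec_lin_zero: "rec_linear R \<Longrightarrow> R 0 = 0"
proof -
  assume "rec_linear R"
  then have "R (0 + 0) = R 0 + R 0" unfolding rec_linear_def by blast
  then show ?thesis by simp
qed

lemma rec_lin_sum: "rec_linear R \<Longrightarrow> R (\<Sum>m\<in>M. f m) = (\<Sum>m\<in>M. R (f m))"
proof (induction M rule: infinite_finite_induct)
  case (insert x F)
  have "sum f (insert x F) = f x + sum f F" using insert(1,2) by (rule sum.insert)
  moreover have "R (f x + sum f F) = R (f x) + R (sum f F)"
    using insert.prems unfolding rec_linear_def by blast
  ultimately show ?case
    by (simp only: insert.IH[OF insert.prems] sum.insert[OF insert(1,2)])
qed (auto simp: rec_lin_zero fun_eq_iff)



lemma dir1: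
  fixes Share :: "(nat \<Rightarrow> 'f::{field,finite}) \<Rightarrow> (nat \<Rightarrow> 'f) \<Rightarrow> (nat \<Rightarrow> nat \<Rightarrow> 'f)"
  assumes L: "is_LMSSS k b l e Share {{..<k}} T" and P: "t_private k t T"
  shows "\<exists>C :: (nat \<Rightarrow> nat \<Rightarrow> 'f) set. linear_code k b C \<and> code_rate k b C \<ge> real l / real (k*b) \<and> dist_atleast k C (t+1)"
proof -
  have SL: "share_linear k b l e Share" and recQ: "recovers l e Share {..<k}"
    and hid: "\<forall>U\<in>T. hides l e Share U" and Tsub: "T \<subseteq> Pow {..<k}"
    using L by (auto simp: is_LMSSS_def)
  have SW: "Share x r \<in> words k b" if "x \<in> vecs l" "r \<in> vecs e" for x r
    using SL that by (auto simp: share_linear_def)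
  obtain R where R: "rec_linear R" "\<forall>x\<in>vecs l. \<forall>r\<in>vecs e. R (restr {..<k} (Share x r)) = x"
    using recQ by (auto simp: recovers_def)
  have Rsh: "R (Share x r) = x" if "x \<in> vecs l" "r \<in> vecs e" for x r
    using R(2) that restr_words[OF SW[OF that]] by metis
  define c where "c m = (\<lambda>i j. if i < k \<and> j < b then R (unitw i j) m else 0)" for m
  have cW: "c m \<in> words k b" for m by (auto simp: c_def words_def)
  have Rdot: "R s m = dot k b (c m) s" if "s \<in> words k b" for s m
  proof -
    have "R s = R (\<Sum>i<k. \<Sum>j<b. wscale (s i j) (unitw i j))"
      using words_decomp[OF that] by simp
    also have "\<dots> = (\<Sum>i<k. \<Sum>j<b. vscale (s i j) (R (unitw i j)))"
      using R(1) by (simp add: rec_lin_sum rec_linear_def)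
    finally have "R s m = (\<Sum>i<k. \<Sum>j<b. s i j * R (unitw i j) m)"
      by (simp add: sum_fun_app vscale_def)
    then show ?thesis by (simp add: dot_def c_def mult.commute)
  qed
  define C where "C = range (\<lambda>lam. \<Sum>i<l. wscale (lam i) (c i))"
  have key: "dot k b (\<Sum>i<l. wscale (lam i) (c i)) (Share x r) = (\<Sum>i<l. lam i * x i)"
    if "x \<in> vecs l" "r \<in> vecs e" for lam x r
    by (simp add: dot_sumL dot_scaleL Rdot[OF SW[OF that], symmetric] Rsh[OF that])
  have zero_e: "0 \<in> vecs e" by (simp add: vecs_def)
  have delta_l: "(\<lambda>i. if i = m then 1 else 0) \<in> vecs l" if "m < l" for m
    using that by (auto simp: vecs_def)
  have sum_delta: "(\<Sum>i<l. lam i * (if i = m then 1 else 0)) = lam m" if "m < l" for lam :: "nat \<Rightarrow> 'f" and m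
  proof -
    have "(\<Sum>i<l. lam i * (if i = m then 1 else 0)) = (\<Sum>i<l. if i = m then lam i else 0)"
      by (intro sum.cong) auto
    then show ?thesis using that by (simp add: sum.delta)
  qed
  have indep: "\<forall>lam. (\<Sum>i<l. wscale (lam i) (c i)) = 0 \<longrightarrow> (\<forall>i<l. lam i = 0)"
  proof (intro allI impI)
    fix lam m assume z: "(\<Sum>i<l. wscale (lam i) (c i)) = 0" and m: "m < l"
    have "dot k b (\<Sum>i<l. wscale (lam i) (c i)) (Share (\<lambda>i. if i = m then 1 else 0) 0) = lam m"
      using key[OF delta_l[OF m] zero_e] sum_delta[OF m] by simp
    then show "lam m = 0" using z by simp
  qed
  have lc: "linear_code k b C"
    unfolding linear_code_def
  proof (intro conjI ballI allI)
    show "C \<subseteq> words k b" unfolding C_def by (auto intro!: words_sum words_scale cW)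
    show "0 \<in> C" unfolding C_def by (rule image_eqI[where x="\<lambda>_. 0"]) simp_all
    fix c1 c2 assume "c1 \<in> C" "c2 \<in> C"
    then obtain lam lam' where "c1 = (\<Sum>i<l. wscale (lam i) (c i))" "c2 = (\<Sum>i<l. wscale (lam' i) (c i))"
      by (auto simp: C_def)
    then have "c1 + c2 = (\<Sum>i<l. wscale ((lam + lam') i) (c i))"
      by (simp add: sum.distrib ws.scale_left_distrib)
    then show "c1 + c2 \<in> C" by (simp add: C_def)
  next
    fix a c1 assume "c1 \<in> C"
    then obtain lam where "c1 = (\<Sum>i<l. wscale (lam i) (c i))" by (auto simp: C_def)
    then have "wscale a c1 = (\<Sum>i<l. wscale (a * lam i) (c i))"
      by (simp add: ws.scale_sum_right)
    then show "wscale a c1 \<in> C" by (simp add: C_def)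
  qed
  have rate: "code_rate k b C \<ge> real l / real (k*b)"
    using dim_family[OF indep] by (simp add: code_rate_def code_dim_def C_def mult.commute)
  have dist: "dist_atleast k C (t+1)"
    unfolding dist_atleast_def
  proof (intro ballI impI, rule ccontr)
    fix c1 c2 assume c1: "c1 \<in> C" and c2: "c2 \<in> C" and ne: "c1 \<noteq> c2"
    define V where "V = {i\<in>{..<k}. c1 i \<noteq> c2 i}"
    assume "\<not> t + 1 \<le> card {i\<in>{..<k}. c1 i \<noteq> c2 i}"
    then have cardV: "card V \<le> t" by (simp add: V_def)
    have "V \<subseteq> {..<k}" by (auto simp: V_def)
    then have VT: "V \<in> T" using P cardV unfolding t_private_def by blast
    obtain lam lam' where l1: "c1 = (\<Sum>i<l. wscale (lam i) (c i))" and l2: "c2 = (\<Sum>i<l. wscale (lam' i) (c i))"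
      using c1 c2 by (auto simp: C_def)
    define mu where "mu i = lam i - lam' i" for i
    have d: "c1 - c2 = (\<Sum>i<l. wscale (mu i) (c i))"
      unfolding l1 l2 mu_def by (simp add: sum_subtractf ws.scale_left_diff_distrib)
    obtain m where m: "m < l" "mu m \<noteq> 0"
    proof (rule ccontr)
      assume "\<not> thesis"
      then have "\<forall>i<l. mu i = 0" using that by blast
      then have "c1 - c2 = 0" unfolding d by (intro sum.neutral) auto
      then show False using ne by simp
    qed
    have dV: "dot k b (c1 - c2) (restr V s) = dot k b (c1 - c2) s" for s
      unfolding dot_def restr_def V_def by (intro sum.cong refl) auto
    have ev: "dot k b (c1 - c2) (restr V (Share x r)) = (\<Sum>i<l. mu i * x i)"
      if "x \<in> vecs l" "r \<in> vecs e" for x r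
    proof -
      have "dot k b (c1 - c2) (restr V (Share x r)) = dot k b (c1 - c2) (Share x r)" by (rule dV)
      also have "\<dots> = (\<Sum>i<l. mu i * x i)" unfolding d by (rule key[OF that])
      finally show ?thesis .
    qed
    let ?p = "pmf_of_set (vecs e) :: (nat \<Rightarrow> 'f) pmf"
    have setp: "set_pmf ?p = vecs e" by (rule set_pmf_of_set[OF vecs_nonempty finite_vecs])
    have zl: "(0::nat\<Rightarrow>'f) \<in> vecs l" by (simp add: vecs_def)
    have "map_pmf (\<lambda>r. restr V (Share (\<lambda>i. if i = m then 1 else 0) r)) ?p =
          map_pmf (\<lambda>r. restr V (Share 0 r)) ?p"
      using hid VT delta_l[OF m(1)] zl unfolding hides_def by blast
    then have "map_pmf (dot k b (c1 - c2)) (map_pmf (\<lambda>r. restr V (Share (\<lambda>i. if i = m then 1 else 0) r)) ?p) =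
          map_pmf (dot k b (c1 - c2)) (map_pmf (\<lambda>r. restr V (Share 0 r)) ?p)" by (rule arg_cong)
    also have "map_pmf (dot k b (c1 - c2)) (map_pmf (\<lambda>r. restr V (Share (\<lambda>i. if i = m then 1 else 0) r)) ?p)
        = map_pmf (\<lambda>_. mu m) ?p"
      unfolding map_pmf_comp
    proof (rule map_pmf_cong[OF refl])
      fix x assume "x \<in> set_pmf ?p"
      then have x: "x \<in> vecs e" using setp by simp
      show "dot k b (c1 - c2) (restr V (Share (\<lambda>i. if i = m then 1 else 0) x)) = mu m"
        by (simp only: ev[OF delta_l[OF m(1)] x] sum_delta[OF m(1)])
    qed
    also have "map_pmf (dot k b (c1 - c2)) (map_pmf (\<lambda>r. restr V (Share 0 r)) ?p)
        = map_pmf (\<lambda>_. 0) ?p"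
      unfolding map_pmf_comp
    proof (rule map_pmf_cong[OF refl])
      fix x assume "x \<in> set_pmf ?p"
      then have x: "x \<in> vecs e" using setp by simp
      show "dot k b (c1 - c2) (restr V (Share 0 x)) = 0"
        by (simp add: ev[OF zl x])
    qed
    finally show False using m(2) by simp
  qed
  show ?thesis using lc rate dist by blast
qed



lemma dot_unit:
  assumes "i < k" "j < b"
  shows "dot k b c (unitw i j) = (c i j :: 'f::field)"
proof -
  have "dot k b c (unitw i j) = (\<Sum>i'<k. if i' = i then (\<Sum>j'<b. c i j' * (if j' = j then 1 else 0)) else 0)"
    unfolding dot_def unitw_def by (intro sum.cong refl) auto
  also have "\<dots> = (\<Sum>i'<k. if i' = i then (\<Sum>j'<b. if j' = j then c i j' else 0) else 0)"
  proof -
    have eq: "\<And>j'. c i j' * (if j' = j then 1 else 0) = (if j' = j then c i j' else 0)" by simp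
    show ?thesis by (simp only: eq)
  qed
  also have "\<dots> = c i j" using assms by (subst sum.delta, simp, subst sum.delta, auto)
  finally show ?thesis .
qed

lemma code_sum: "linear_code k b C \<Longrightarrow> (\<And>m. m \<in> M \<Longrightarrow> f m \<in> C) \<Longrightarrow> sum f M \<in> C"
  by (induction M rule: infinite_finite_induct) (auto simp: linear_code_def)

lemma rho_inv:
  assumes y: "(y :: nat \<Rightarrow> nat \<Rightarrow> 'f::field) \<in> words k b"
  shows "(\<lambda>i j. if i < k \<and> j < b then (\<lambda>n. if n < k*b then y (n div b) (n mod b) else 0) (i*b+j) else 0) = y"
proof (intro ext)
  fix i j
  show "(if i < k \<and> j < b then (\<lambda>n. if n < k*b then y (n div b) (n mod b) else 0) (i*b+j) else 0) = y i j"
  proof (cases "i < k \<and> j < b")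
    case True
    then have "i*b + j < (i+1)*b" by simp
    also have "(i+1)*b \<le> k*b" using True by (intro mult_le_mono1) simp
    finally have "i*b + j < k*b" .
    moreover have "(i*b+j) div b = i" "(i*b+j) mod b = j" using True by auto
    ultimately show ?thesis using True by simp
  next
    case False then show ?thesis using y by (auto simp: words_def)
  qed
qed


lemma shift_pmf:
  assumes a: "a \<in> vecs n"
  shows "map_pmf (\<lambda>r. r + a) (pmf_of_set (vecs n :: (nat \<Rightarrow> 'f::{field,finite}) set)) = pmf_of_set (vecs n)"
proof -
  have "map_pmf (\<lambda>r. r + a) (pmf_of_set (vecs n :: (nat \<Rightarrow> 'f) set)) = pmf_of_set ((\<lambda>r. r + a) ` vecs n)"
    by (rule map_pmf_of_set_inj) (auto simp: inj_on_def vecs_nonempty finite_vecs)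
  also have "(\<lambda>r. r + a) ` vecs n = vecs n"
  proof
    show "(\<lambda>r. r + a) ` vecs n \<subseteq> vecs n" using a by (auto simp: vecs_def)
    show "vecs n \<subseteq> (\<lambda>r. r + a) ` vecs n"
    proof
      fix v :: "nat \<Rightarrow> 'f" assume v: "v \<in> vecs n"
      have "v = (v - a) + a" by simp
      moreover have "v - a \<in> vecs n" using v a by (auto simp: vecs_def)
      ultimately show "v \<in> (\<lambda>r. r + a) ` vecs n" by blast
    qed
  qed
  finally show ?thesis .
qed

lemma dir2:
  fixes C :: "(nat \<Rightarrow> nat \<Rightarrow> 'f::{field,finite}) set"
  assumes pos: "0 < k" "0 < b" "0 < l"
   and lc: "linear_code k b C" and rate: "code_rate k b C \<ge> real l / real (k*b)"
   and dist: "dist_atleast k C (t+1)"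
  shows "\<exists>e (Share :: (nat \<Rightarrow> 'f) \<Rightarrow> (nat \<Rightarrow> 'f) \<Rightarrow> (nat \<Rightarrow> nat \<Rightarrow> 'f)) T.
            is_LMSSS k b l e Share {{..<k}} T \<and> t_private k t T"
proof -
  have CW: "C \<subseteq> words k b" and C0: "0 \<in> C" using lc by (auto simp: linear_code_def)
  have finC: "finite C" using CW finite_words finite_subset by blast
  have "real l \<le> real (ws.dim C)"
  proof -
    have kb: "real (k*b) > 0" using pos by simp
    have "real l / real (k*b) \<le> real (ws.dim C) / real (k*b)"
      using rate by (simp add: code_rate_def code_dim_def mult.commute)
    then show ?thesis using kb by (simp add: divide_le_cancel)
  qed
  then have ldim: "l \<le> ws.dim C" by simp
  obtain c where cC: "\<forall>i<l. c i \<in> C"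
    and indep: "\<forall>lam. (\<Sum>i<l. wscale (lam i) (c i)) = 0 \<longrightarrow> (\<forall>i<l. lam i = 0)"
    using basis_family[OF finC ldim] by blast
  have zero_lemma: "cc = 0" if cc: "cc \<in> C" "card {i\<in>{..<k}. cc i \<noteq> 0} \<le> t" for cc
  proof (rule ccontr)
    assume "cc \<noteq> 0"
    then have "t + 1 \<le> card {i\<in>{..<k}. cc i \<noteq> (0::nat\<Rightarrow>nat\<Rightarrow>'f) i}"
      using dist cc(1) C0 unfolding dist_atleast_def by blast
    then show False using cc(2) by simp
  qed
  have tk: "t < k"
  proof (rule ccontr)
    assume "\<not> t < k"
    moreover have "card {i\<in>{..<k}. c 0 i \<noteq> 0} \<le> card {..<k}" by (rule card_mono) auto
    ultimately have "card {i\<in>{..<k}. c 0 i \<noteq> 0} \<le> t" by simp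
    then have "c 0 = 0" using zero_lemma cC pos(3) by blast
    then have "(\<Sum>i<l. wscale (if i = 0 then 1 else 0) (c i)) = 0"
      using wscale_delta_sum[OF pos(3), of c] by simp
    then have "(\<lambda>i::nat. if i = 0 then 1 else (0::'f)) 0 = 0"
      using spec[OF indep, of "\<lambda>i. if i = 0 then 1 else 0"] pos(3) by blast
    then show False by simp
  qed
  have dualU: "\<exists>u. \<forall>m<l. u m \<in> {z\<in>words k b. \<forall>i\<in>U. \<forall>j. z i j = 0} \<and>
                  (\<forall>m'<l. dot k b (c m') (u m) = (if m' = m then 1 else 0))"
    if U: "U \<subseteq> {..<k}" "card U \<le> t" for U
  proof (rule dual_exists)
    let ?Z = "{z\<in>words k b. \<forall>i\<in>U. \<forall>j. z i j = (0::'f)}"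
    show "z + z' \<in> ?Z" if "z \<in> ?Z" "z' \<in> ?Z" for z z' using that by (auto simp: words_def)
    show "wscale a z \<in> ?Z" if "z \<in> ?Z" for a z using that by (auto simp: words_def wscale_def)
    show "0 \<in> ?Z" by (auto simp: words_def)
    fix lam assume h: "\<forall>z\<in>?Z. (\<Sum>m<l. lam m * dot k b (c m) z) = 0"
    define cc where "cc = (\<Sum>m<l. wscale (lam m) (c m))"
    have ccC: "cc \<in> C" unfolding cc_def
      using lc cC by (intro code_sum) (auto simp: linear_code_def)
    have ccW: "cc \<in> words k b" using ccC CW by blast
    have "cc i = 0" if i: "i < k" "i \<notin> U" for i
    proof (rule ext)
      fix j show "cc i j = (0::nat\<Rightarrow>'f) j"
      proof (cases "j < b")
        case True
        have uZ: "unitw i j \<in> ?Z" using i True by (auto simp: words_def unitw_def)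
        have "dot k b cc (unitw i j) = (\<Sum>m<l. lam m * dot k b (c m) (unitw i j))"
          unfolding cc_def by (simp add: dot_sumL dot_scaleL)
        also have "\<dots> = 0" using h uZ by blast
        finally show ?thesis using dot_unit[OF i(1) True, of cc] by simp
      next
        case False then show ?thesis using ccW by (simp add: words_def)
      qed
    qed
    then have "{i\<in>{..<k}. cc i \<noteq> 0} \<subseteq> U" by blast
    then have "card {i\<in>{..<k}. cc i \<noteq> 0} \<le> t"
      using U card_mono[OF finite_subset[OF U(1)]] by (meson finite_lessThan le_trans)
    then have "cc = 0" using zero_lemma ccC by blast
    then show "\<forall>m<l. lam m = 0" using indep unfolding cc_def by blast
  qed
  obtain g where g: "\<forall>m<l. g m \<in> words k b \<and> (\<forall>m'<l. dot k b (c m') (g m) = (if m' = m then 1 else 0))"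
    using dualU[of "{}"] by auto
  define G where "G x = (\<Sum>i<l. wscale (x i) (g i))" for x :: "nat \<Rightarrow> 'f"
  define P where "P s = s - (\<Sum>m<l. wscale (dot k b (c m) s) (g m))" for s
  define rho where "rho r = (\<lambda>i j. if i < k \<and> j < b then r (i*b+j) else (0::'f))" for r :: "nat \<Rightarrow> 'f"
  define Share where "Share x r = G x + P (rho r)" for x r
  define T where "T = {U. U \<subseteq> {..<k} \<and> card U \<le> t}"
  have GW: "G x \<in> words k b" for x
    unfolding G_def using g by (intro words_sum words_scale) auto
  have PW: "P s \<in> words k b" if "s \<in> words k b" for s
    unfolding P_def using g that by (intro words_diff words_sum words_scale) auto
  have rhoW: "rho r \<in> words k b" for r by (simp add: rho_def words_def)
  have dotG: "dot k b (c m) (G x) = x m" if "m < l" for m x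
  proof -
    have "dot k b (c m) (G x) = (\<Sum>i<l. x i * (if m = i then 1 else 0))"
      unfolding G_def using g that by (simp add: dot_sum dot_scale)
    also have "\<dots> = (\<Sum>i<l. if m = i then x i else 0)" by (intro sum.cong) auto
    also have "\<dots> = x m" using that by (subst sum.delta') auto
    finally show ?thesis .
  qed
  have dotP: "dot k b (c m) (P s) = 0" if "m < l" for m s
  proof -
    have "dot k b (c m) (P s) = dot k b (c m) s - (\<Sum>i<l. dot k b (c i) s * (if m = i then 1 else 0))"
      unfolding P_def using g that by (simp add: dot_sum dot_scale dot_diff)
    also have "(\<Sum>i<l. dot k b (c i) s * (if m = i then 1 else 0)) = (\<Sum>i<l. if m = i then dot k b (c i) s else 0)"
      by (intro sum.cong) auto
    also have "\<dots> = dot k b (c m) s" using that by (subst sum.delta') auto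
    finally show ?thesis by simp
  qed
  have Gadd: "G (x + x') = G x + G x'" for x x'
    unfolding G_def by (simp add: ws.scale_left_distrib sum.distrib)
  have Padd: "P (s + s') = P s + P s'" for s s'
    unfolding P_def by (simp add: dot_add ws.scale_left_distrib sum.distrib)
  have rhoadd: "rho (r + r') = rho r + rho r'" for r r'
    by (simp add: rho_def fun_eq_iff)
  have Gscale: "G (vscale a x) = wscale a (G x)" for a x
    unfolding G_def by (simp add: vscale_def ws.scale_sum_right)
  have Pscale: "P (wscale a s) = wscale a (P s)" for a s
    unfolding P_def by (simp add: dot_scale ws.scale_sum_right ws.scale_right_diff_distrib)
  have rhoscale: "rho (vscale a r) = wscale a (rho r)" for a r
    by (simp add: rho_def fun_eq_iff vscale_def wscale_def)
  have SL: "share_linear k b l (k*b) Share"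
    unfolding share_linear_def
  proof (intro conjI ballI allI)
    fix x r show "Share x r \<in> words k b" unfolding Share_def using GW PW rhoW by (intro words_add) auto
  next
    fix x r x' r' show "Share (x + x') (r + r') = Share x r + Share x' r'"
      unfolding Share_def Gadd rhoadd Padd by (simp add: algebra_simps)
  next
    fix x r a show "Share (vscale a x) (vscale a r) = wscale a (Share x r)"
      unfolding Share_def Gscale rhoscale Pscale by (simp add: ws.scale_right_distrib)
  qed
  define R where "R s = (\<lambda>i. if i < l then dot k b (c i) s else 0)" for s
  have recs: "recovers l (k*b) Share {..<k}"
    unfolding recovers_def
  proof (intro exI conjI ballI)
    show "rec_linear R" unfolding rec_linear_def R_def
      by (auto simp: fun_eq_iff dot_add dot_scale vscale_def)
    fix x r :: "nat \<Rightarrow> 'f" assume x: "x \<in> vecs l" and "r \<in> vecs (k*b)"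
    have "restr {..<k} (Share x r) = Share x r"
      by (rule restr_words[where b=b]) (unfold Share_def, intro words_add GW PW rhoW)
    moreover have "R (Share x r) = x"
    proof
      fix i show "R (Share x r) i = x i"
        using x by (auto simp: R_def Share_def dot_add dotG dotP vecs_def)
    qed
    ultimately show "R (restr {..<k} (Share x r)) = x" by simp
  qed
  let ?p = "pmf_of_set (vecs (k*b)) :: (nat \<Rightarrow> 'f) pmf"
  have hideU: "map_pmf (\<lambda>r. restr U (Share x r)) ?p = map_pmf (\<lambda>r. restr U (Share 0 r)) ?p"
    if U: "U \<in> T" and x: "x \<in> vecs l" for U and x :: "nat \<Rightarrow> 'f"
  proof -
    obtain u where u: "\<forall>m<l. u m \<in> {z\<in>words k b. \<forall>i\<in>U. \<forall>j. z i j = 0} \<and>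
                  (\<forall>m'<l. dot k b (c m') (u m) = (if m' = m then 1 else 0))"
      using dualU[of U] U unfolding T_def by blast
    define w where "w = (\<Sum>i<l. wscale (x i) (u i))"
    define y where "y = G x - w"
    have wW: "w \<in> words k b" unfolding w_def using u by (intro words_sum words_scale) auto
    have yW: "y \<in> words k b" unfolding y_def using wW GW by (intro words_diff)
    have wU: "w i j = 0" if "i \<in> U" for i j
      unfolding w_def sum_fun_app2 using u that by (simp add: wscale_def)
    have dotw: "dot k b (c m) w = x m" if "m < l" for m
    proof -
      have "dot k b (c m) w = (\<Sum>i<l. x i * (if m = i then 1 else 0))"
        unfolding w_def using u that by (simp add: dot_sum dot_scale)
      also have "\<dots> = (\<Sum>i<l. if m = i then x i else 0)" by (intro sum.cong) auto
      also have "\<dots> = x m" using that by (subst sum.delta') auto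
      finally show ?thesis .
    qed
    have Py: "P y = y"
    proof -
      have "(\<Sum>m<l. wscale (dot k b (c m) y) (g m)) = 0"
      proof (rule sum.neutral, intro ballI)
        fix m assume "m \<in> {..<l}"
        then have "dot k b (c m) y = 0" unfolding y_def by (simp add: dot_diff dotG dotw)
        then show "wscale (dot k b (c m) y) (g m) = 0" by simp
      qed
      then show ?thesis unfolding P_def by simp
    qed
    define a where "a = (\<lambda>n. if n < k*b then y (n div b) (n mod b) else (0::'f))"
    have aV: "a \<in> vecs (k*b)" by (simp add: a_def vecs_def)
    have rhoa: "rho a = y" unfolding rho_def a_def by (rule rho_inv[OF yW])
    have G0: "G 0 = 0" unfolding G_def by (intro sum.neutral) auto
    have pt: "restr U (Share x r) = restr U (Share 0 (r + a))" for r
    proof -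
      have "Share 0 (r + a) = 0 + (P (rho r) + y)"
        by (simp only: Share_def G0 rhoadd Padd rhoa Py)
      then have "Share 0 (r + a) = P (rho r) + G x - w"
        unfolding y_def by (simp add: algebra_simps)
      then show ?thesis unfolding Share_def
        by (auto simp: restr_def fun_eq_iff wU)
    qed
    have "map_pmf (\<lambda>r. restr U (Share x r)) ?p = map_pmf (\<lambda>r. restr U (Share 0 (r + a))) ?p"
      by (simp only: pt)
    also have "\<dots> = map_pmf (\<lambda>r. restr U (Share 0 r)) (map_pmf (\<lambda>r. r + a) ?p)"
      by (simp only: map_pmf_comp)
    also have "map_pmf (\<lambda>r. r + a) ?p = ?p" by (rule shift_pmf[OF aV])
    finally show ?thesis .
  qed
  have LM: "is_LMSSS k b l (k*b) Share {{..<k}} T"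
    unfolding is_LMSSS_def
  proof (intro conjI)
    show "share_linear k b l (k*b) Share" by (rule SL)
    show "{{..<k}} \<subseteq> Pow {..<k}" by auto
    show "T \<subseteq> Pow {..<k}" by (auto simp: T_def)
    show "\<forall>A\<in>{{..<k}}. \<forall>B. A \<subseteq> B \<and> B \<subseteq> {..<k} \<longrightarrow> B \<in> {{..<k}}" by auto
    show "\<forall>A\<in>T. \<forall>B. B \<subseteq> A \<longrightarrow> B \<in> T"
    proof (intro ballI allI impI)
      fix A B assume A: "A \<in> T" and BA: "B \<subseteq> A"
      then have "A \<subseteq> {..<k}" "card A \<le> t" by (auto simp: T_def)
      moreover have "card B \<le> card A" using BA \<open>A \<subseteq> {..<k}\<close> finite_subset
        by (metis card_mono finite_lessThan)
      ultimately show "B \<in> T" using BA by (auto simp: T_def)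
    qed
    show "{{..<k}} \<inter> T = {}" using tk by (auto simp: T_def)
    show "\<forall>Q\<in>{{..<k}}. recovers l (k*b) Share Q" using recs by simp
    show "\<forall>U\<in>T. hides l (k*b) Share U"
      unfolding hides_def using hideU by (metis (no_types, lifting))
  qed
  have "t_private k t T" by (auto simp: t_private_def T_def)
  then show ?thesis using LM by blast
qed


theorem mainTheorem2:
  fixes t k b l :: nat
  assumes "0 < t" "0 < k" "0 < b" "0 < l" "l < b * k"
  shows "(\<exists>(e::nat) (Share :: (nat \<Rightarrow> 'f::{field,finite}) \<Rightarrow> (nat \<Rightarrow> 'f) \<Rightarrow> (nat \<Rightarrow> nat \<Rightarrow> 'f)) T.
            is_LMSSS k b l e Share {{..<k}} T \<and> t_private k t T)
     \<longleftrightarrow>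
         (\<exists>C :: (nat \<Rightarrow> nat \<Rightarrow> 'f) set.
            linear_code k b C \<and> code_rate k b C \<ge> real l / real (k * b) \<and>
            dist_atleast k C (t + 1))"
proof
  assume "\<exists>(e::nat) (Share :: (nat \<Rightarrow> 'f::{field,finite}) \<Rightarrow> (nat \<Rightarrow> 'f) \<Rightarrow> (nat \<Rightarrow> nat \<Rightarrow> 'f)) T.
            is_LMSSS k b l e Share {{..<k}} T \<and> t_private k t T"
  then obtain e and Share :: "(nat \<Rightarrow> 'f) \<Rightarrow> (nat \<Rightarrow> 'f) \<Rightarrow> (nat \<Rightarrow> nat \<Rightarrow> 'f)" and T
    where "is_LMSSS k b l e Share {{..<k}} T" "t_private k t T" by blast
  then show "\<exists>C :: (nat \<Rightarrow> nat \<Rightarrow> 'f) set.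
            linear_code k b C \<and> code_rate k b C \<ge> real l / real (k * b) \<and>
            dist_atleast k C (t + 1)" by (rule dir1)
next
  assume "\<exists>C :: (nat \<Rightarrow> nat \<Rightarrow> 'f) set.
            linear_code k b C \<and> code_rate k b C \<ge> real l / real (k * b) \<and>
            dist_atleast k C (t + 1)"
  then obtain C :: "(nat \<Rightarrow> nat \<Rightarrow> 'f) set" where
    "linear_code k b C" "code_rate k b C \<ge> real l / real (k * b)" "dist_atleast k C (t + 1)" by blast
  then show "\<exists>(e::nat) (Share :: (nat \<Rightarrow> 'f::{field,finite}) \<Rightarrow> (nat \<Rightarrow> 'f) \<Rightarrow> (nat \<Rightarrow> nat \<Rightarrow> 'f)) T.
            is_LMSSS k b l e Share {{..<k}} T \<and> t_private k t T"
    using dir2[OF assms(2,3,4)] by blast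
qed

end
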